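(* For the least-squares approximate policy iteration sequence described in the context, for every $k\ge1$, $$\|J_k-J^{\mu_k}\|_\infty\le \alpha^{m+H-1}\delta_{FV}\,\|J_{k-1}-J^{\mu_{k-1}}\|_\infty+\frac{\alpha^m+\alpha^{m+H-1}}{1-\alpha}\delta_{FV}+\delta_{app}+\delta_{FV}\epsilon_{PE}.$$ Consequently, writing $\beta:=\alpha^{m+H-1}\delta_{FV}$ and $\tau:=\frac{\alpha^m+\alpha^{m+H-1}}{1-\alpha}\delta_{FV}+\delta_{app}+\delta_{FV}\epsilon_{PE}$, if $\beta<1$ then $\|J_k-J^{\mu_k}\|_\infty\le\beta^k\|J_0-J^{\mu_0}\|_\infty+\frac{\tau}{1-\beta}$ for all $k\ge0$.
   Context: Consider a Markov decision process with finite state space $S$, finite action space $A$, transition probabilities $P_{ij}(a)$, rewards $r(s,a)\in[0,1]$, and discount factor $\alpha\in(0,1)$. A (deterministic stationary) policy is a map $\mu:S\to A$; its value is $J^\mu(s)=E[\sum_{t\ge0}\alpha^t r(s_t,\mu(s_t))\mid s_0=s]$, and $J^*(s)=\max_\mu J^\mu(s)$. For a policy $\mu$, $(T_\mu J)(s)=r(s,\mu(s))+\alpha\sum_j P_{sj}(\mu(s))J(j)$; the Bellman operator is $(TJ)(s)=\max_{a\in A}\{r(s,a)+\alpha\sum_j P_{sj}(a)J(j)\}$; powers denote repeated application. $\|\cdot\|_\infty$ denotes the max norm and the induced matrix norm. Least-squares approximate policy iteration: fix integers $m\ge1$, $H\ge1$, constants $\epsilon_{LA},\epsilon_{PE}\ge0$,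 a feature matrix $\Phi\in\mathbb{R}^{|S|\times d}$ whose row $i$ is $\phi(i)^\top$, and subsets $D_k\subseteq S$ ($k\ge0$) such that $\{\phi(i)\}_{i\in D_k}$ has rank $d$. Let $\Phi_{D_k}$ be the submatrix of $\Phi$ with rows indexed by $D_k$, $P_k\in\{0,1\}^{|D_k|\times|S|}$ the matrix selecting the coordinates in $D_k$, and $\mathcal{M}_{k+1}:=\Phi(\Phi_{D_k}^\top\Phi_{D_k})^{-1}\Phi_{D_k}^\top P_k$ for $k\ge0$. Start with arbitrary $J_0\in\mathbb{R}^{|S|}$ and an arbitrary policy $\mu_0$. For each $k\ge0$: $\mu_{k+1}$ is any policy with $\|T^HJ_k-T_{\mu_{k+1}}T^{H-1}J_k\|_\infty\le\epsilon_{LA}$; $w_{k+1}\in\mathbb{R}^{|S|}$ is a noise vector with $w_{k+1}(i)=0$ for $i\notin D_k$ and $\|w_{k+1}\|_\infty\le\epsilon_{PE}$; and $J_{k+1}=\mathcal{M}_{k+1}(T^m_{\mu_{k+1}}T^{H-1}J_k+w_{k+1})$. Define $\delta_{FV}:=\sup_{k\ge1}\|\mathcal{M}_k\|_\infty$ (assumed finite) and $\delta_{app}:=\sup_{k\ge1}\sup_{\mu}\|\mathcal{M}_kJ^\mu-J^\mu\|_\infty$, the inner supremum over all policies. *)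

theory Defs
  imports "HOL-Analysis.Analysis"
begin

text \<open>Value vectors are functions on the finite state type 's; matrices are
  functions 's => 's => real. P s a j is the transition probability P_{sj}(a).\<close>

definition supnorm :: "('s::finite \<Rightarrow> real) \<Rightarrow> real" where
  "supnorm J = Max (range (\<lambda>s. \<bar>J s\<bar>))"

definition matnorm :: "('s::finite \<Rightarrow> 's \<Rightarrow> real) \<Rightarrow> real" where
  "matnorm M = Max (range (\<lambda>s. \<Sum>j\<in>UNIV. \<bar>M s j\<bar>))"

definition matapp :: "('s::finite \<Rightarrow> 's \<Rightarrow> real) \<Rightarrow> ('s \<Rightarrow> real) \<Rightarrow> ('s \<Rightarrow> real)" where
  "matapp M x = (\<lambda>s. \<Sum>j\<in>UNIV. M s j * x j)"

definition Tmu :: "('s::finite \<Rightarrow> 'a \<Rightarrow> 's \<Rightarrow> real) \<Rightarrow> ('s \<Rightarrow> 'a \<Rightarrow> real) \<Rightarrow> real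
    \<Rightarrow> ('s \<Rightarrow> 'a) \<Rightarrow> ('s \<Rightarrow> real) \<Rightarrow> ('s \<Rightarrow> real)" where
  "Tmu P r \<alpha> \<mu> J = (\<lambda>s. r s (\<mu> s) + \<alpha> * (\<Sum>j\<in>UNIV. P s (\<mu> s) j * J j))"

definition Tbell :: "('s::finite \<Rightarrow> 'a::finite \<Rightarrow> 's \<Rightarrow> real) \<Rightarrow> ('s \<Rightarrow> 'a \<Rightarrow> real) \<Rightarrow> real
    \<Rightarrow> ('s \<Rightarrow> real) \<Rightarrow> ('s \<Rightarrow> real)" where
  "Tbell P r \<alpha> J = (\<lambda>s. Max (range (\<lambda>a. r s a + \<alpha> * (\<Sum>j\<in>UNIV. P s a j * J j))))"

fun Pstep :: "('s::finite \<Rightarrow> 'a \<Rightarrow> 's \<Rightarrow> real) \<Rightarrow> ('s \<Rightarrow> 'a) \<Rightarrow> nat \<Rightarrow> 's \<Rightarrow> 's \<Rightarrow> real" where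
  "Pstep P \<mu> 0 s j = (if s = j then 1 else 0)"
| "Pstep P \<mu> (Suc t) s j = (\<Sum>i\<in>UNIV. Pstep P \<mu> t s i * P i (\<mu> i) j)"

text \<open>J^mu(s) = E[sum_t alpha^t r(s_t, mu(s_t)) | s_0 = s], with the expectation
  of the t-th reward written out via the t-step transition probabilities.\<close>
definition Jpol :: "('s::finite \<Rightarrow> 'a \<Rightarrow> 's \<Rightarrow> real) \<Rightarrow> ('s \<Rightarrow> 'a \<Rightarrow> real) \<Rightarrow> real
    \<Rightarrow> ('s \<Rightarrow> 'a) \<Rightarrow> ('s \<Rightarrow> real)" where
  "Jpol P r \<alpha> \<mu> = (\<lambda>s. \<Sum>t. \<alpha> ^ t * (\<Sum>j\<in>UNIV. Pstep P \<mu> t s j * r j (\<mu> j)))"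

text \<open>Gram matrix Phi_D^T Phi_D = sum over i in D of phi(i) phi(i)^T.\<close>
definition gram :: "('s \<Rightarrow> real^'d) \<Rightarrow> 's set \<Rightarrow> real^'d^'d" where
  "gram \<phi> D = (\<Sum>i\<in>D. (\<chi> a b. (\<phi> i) $ a * (\<phi> i) $ b))"

text \<open>The matrix Phi (Phi_D^T Phi_D)^{-1} Phi_D^T P_D, written entrywise:
  entry (s,j) is phi(s)^T G^{-1} phi(j) if j in D and 0 otherwise.\<close>
definition lsq_mat :: "('s::finite \<Rightarrow> real^'d) \<Rightarrow> 's set \<Rightarrow> 's \<Rightarrow> 's \<Rightarrow> real" where
  "lsq_mat \<phi> D = (\<lambda>s j. if j \<in> D then \<phi> s \<bullet> (matrix_inv (gram \<phi> D) *v \<phi> j) else 0)"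

end

theory Submission
  imports Defs
begin

lemma supnorm_ge: "\<bar>x s\<bar> \<le> supnorm (x::'s::finite \<Rightarrow> real)"
  unfolding supnorm_def by (rule Max_ge) auto

lemma supnorm_le: "(\<And>s. \<bar>x s\<bar> \<le> c) \<Longrightarrow> supnorm (x::'s::finite \<Rightarrow> real) \<le> c"
  unfolding supnorm_def by (subst Max_le_iff) auto

lemma supnorm_nonneg: "0 \<le> supnorm (x::'s::finite \<Rightarrow> real)"
  using supnorm_ge[of x] abs_ge_zero order_trans by blast

lemma matnorm_ge: "(\<Sum>j\<in>UNIV. \<bar>M s j\<bar>) \<le> matnorm (M::'s::finite \<Rightarrow> 's \<Rightarrow> real)"
  unfolding matnorm_def by (rule Max_ge) auto

lemma matnorm_nonneg: "0 \<le> matnorm (M::'s::finite \<Rightarrow> 's \<Rightarrow> real)"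
  using matnorm_ge[of M] sum_nonneg[of UNIV "\<lambda>j. \<bar>M _ j\<bar>"] by (meson abs_ge_zero order_trans)

lemma matapp_bound: "\<bar>matapp M x s\<bar> \<le> matnorm M * supnorm (x::'s::finite \<Rightarrow> real)"
proof -
  have "\<bar>matapp M x s\<bar> \<le> (\<Sum>j\<in>UNIV. \<bar>M s j\<bar> * \<bar>x j\<bar>)"
    unfolding matapp_def using sum_abs[of "\<lambda>j. M s j * x j" UNIV] by (simp add: abs_mult)
  also have "\<dots> \<le> (\<Sum>j\<in>UNIV. \<bar>M s j\<bar> * supnorm x)"
    by (rule sum_mono) (rule mult_left_mono[OF supnorm_ge abs_ge_zero])
  also have "\<dots> = (\<Sum>j\<in>UNIV. \<bar>M s j\<bar>) * supnorm x" by (simp add: sum_distrib_right)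
  also have "\<dots> \<le> matnorm M * supnorm x"
    by (rule mult_right_mono[OF matnorm_ge supnorm_nonneg])
  finally show ?thesis .
qed

lemma supnorm_matapp: "supnorm (matapp M x) \<le> matnorm M * supnorm (x::'s::finite \<Rightarrow> real)"
  by (rule supnorm_le, rule matapp_bound)

lemma matapp_split: "matapp M (\<lambda>s. y s + w s) s =
   matapp M (\<lambda>s. y s - q s) s + (matapp M q s - q s) + matapp M w s + q s"
proof -
  have "matapp M (\<lambda>s. y s + w s) s = (\<Sum>j\<in>UNIV. M s j * (y j - q j) + M s j * q j + M s j * w j)"
    unfolding matapp_def by (rule sum.cong) (simp_all add: algebra_simps)
  thus ?thesis unfolding matapp_def by (simp add: sum.distrib)
qed

lemma stoch_comb:
  fixes p :: "'s::finite \<Rightarrow> real"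
  assumes "\<And>j. p j \<ge> 0" "(\<Sum>j\<in>UNIV. p j) = 1"
  shows "\<bar>\<Sum>j\<in>UNIV. p j * x j\<bar> \<le> supnorm x"
proof -
  have "\<bar>\<Sum>j\<in>UNIV. p j * x j\<bar> \<le> (\<Sum>j\<in>UNIV. p j * \<bar>x j\<bar>)"
    by (rule order_trans[OF sum_abs]) (simp add: abs_mult assms(1))
  also have "\<dots> \<le> (\<Sum>j\<in>UNIV. p j * supnorm x)"
    by (rule sum_mono) (rule mult_left_mono[OF supnorm_ge assms(1)])
  also have "\<dots> = supnorm x" using assms(2) by (simp add: sum_distrib_right[symmetric])
  finally show ?thesis .
qed

lemma stoch_range:
  fixes p :: "'s::finite \<Rightarrow> real"
  assumes "\<And>j. p j \<ge> 0" "(\<Sum>j\<in>UNIV. p j) = 1" "\<And>j. a \<le> x j \<and> x j \<le> b"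
  shows "a \<le> (\<Sum>j\<in>UNIV. p j * x j) \<and> (\<Sum>j\<in>UNIV. p j * x j) \<le> b"
proof
  have "(\<Sum>j\<in>UNIV. p j * a) \<le> (\<Sum>j\<in>UNIV. p j * x j)"
    by (rule sum_mono) (rule mult_left_mono, use assms in auto)
  thus "a \<le> (\<Sum>j\<in>UNIV. p j * x j)" using assms(2) by (simp add: sum_distrib_right[symmetric])
  have "(\<Sum>j\<in>UNIV. p j * x j) \<le> (\<Sum>j\<in>UNIV. p j * b)"
    by (rule sum_mono) (rule mult_left_mono, use assms in auto)
  thus "(\<Sum>j\<in>UNIV. p j * x j) \<le> b" using assms(2) by (simp add: sum_distrib_right[symmetric])
qed

lemma delta_sum1: "(\<Sum>i\<in>UNIV. (if s = i then 1 else 0) * f i) = (f (s::'s::finite)::real)"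
proof -
  have "(\<Sum>i\<in>UNIV. (if s = i then 1 else 0) * f i) = (\<Sum>i\<in>UNIV. if s = i then f i else 0)"
    by (rule sum.cong) auto
  also have "\<dots> = f s" using sum.delta[of UNIV s f] by simp
  finally show ?thesis .
qed

lemma delta_sum2: "(\<Sum>i\<in>UNIV. f i * (if i = j then 1 else 0)) = (f (j::'s::finite)::real)"
proof -
  have "(\<Sum>i\<in>UNIV. f i * (if i = j then 1 else 0)) = (\<Sum>i\<in>UNIV. if i = j then f i else 0)"
    by (rule sum.cong) auto
  also have "\<dots> = f j" using sum.delta'[of UNIV j f] by simp
  finally show ?thesis .
qed

context
  fixes P :: "'s::finite \<Rightarrow> 'a::finite \<Rightarrow> 's \<Rightarrow> real" and r :: "'s \<Rightarrow> 'a \<Rightarrow> real" and \<alpha> :: real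
  assumes P_nonneg: "\<And>s a j. P s a j \<ge> 0"
    and P_stoch: "\<And>s a. (\<Sum>j\<in>UNIV. P s a j) = 1"
    and r_range: "\<And>s a. 0 \<le> r s a \<and> r s a \<le> 1"
    and alpha: "0 < \<alpha>" "\<alpha> < 1"
begin

lemma Tmu_contr: "supnorm (\<lambda>s. Tmu P r \<alpha> \<nu> J1 s - Tmu P r \<alpha> \<nu> J2 s) \<le> \<alpha> * supnorm (\<lambda>s. J1 s - J2 s)"
proof (rule supnorm_le)
  fix s
  have "Tmu P r \<alpha> \<nu> J1 s - Tmu P r \<alpha> \<nu> J2 s = \<alpha> * (\<Sum>j\<in>UNIV. P s (\<nu> s) j * (J1 j - J2 j))"
    unfolding Tmu_def by (simp add: algebra_simps sum_subtractf)
  moreover have "\<bar>\<Sum>j\<in>UNIV. P s (\<nu> s) j * (J1 j - J2 j)\<bar> \<le> supnorm (\<lambda>s. J1 s - J2 s)"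
    by (rule stoch_comb) (auto simp: P_nonneg P_stoch)
  ultimately show "\<bar>Tmu P r \<alpha> \<nu> J1 s - Tmu P r \<alpha> \<nu> J2 s\<bar> \<le> \<alpha> * supnorm (\<lambda>s. J1 s - J2 s)"
    using alpha by (simp add: abs_mult)
qed

lemma Tmu_contr_pow: "supnorm (\<lambda>s. (Tmu P r \<alpha> \<nu> ^^ n) J1 s - (Tmu P r \<alpha> \<nu> ^^ n) J2 s) \<le> \<alpha> ^ n * supnorm (\<lambda>s. J1 s - J2 s)"
proof (induction n)
  case 0 then show ?case by simp
next
  case (Suc n)
  have "supnorm (\<lambda>s. (Tmu P r \<alpha> \<nu> ^^ Suc n) J1 s - (Tmu P r \<alpha> \<nu> ^^ Suc n) J2 s)
     \<le> \<alpha> * supnorm (\<lambda>s. (Tmu P r \<alpha> \<nu> ^^ n) J1 s - (Tmu P r \<alpha> \<nu> ^^ n) J2 s)"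
    using Tmu_contr by simp
  also have "\<dots> \<le> \<alpha> * (\<alpha> ^ n * supnorm (\<lambda>s. J1 s - J2 s))"
    by (rule mult_left_mono) (use Suc alpha in auto)
  finally show ?case by simp
qed

lemma Max_diff:
  fixes f g :: "'b::finite \<Rightarrow> real"
  assumes "\<And>a. \<bar>f a - g a\<bar> \<le> c"
  shows "\<bar>Max (range f) - Max (range g)\<bar> \<le> c"
proof -
  obtain a where a: "Max (range f) = f a" using Max_in[of "range f"] by fastforce
  obtain b where b: "Max (range g) = g b" using Max_in[of "range g"] by fastforce
  have "g a \<le> Max (range g)" "f b \<le> Max (range f)" by (auto intro: Max_ge)
  thus ?thesis using a b assms[of a] assms[of b] by (auto simp: abs_le_iff)
qed

lemma Tbell_contr: "supnorm (\<lambda>s. Tbell P r \<alpha> J1 s - Tbell P r \<alpha> J2 s) \<le> \<alpha> * supnorm (\<lambda>s. J1 s - J2 s)"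
proof (rule supnorm_le)
  fix s
  show "\<bar>Tbell P r \<alpha> J1 s - Tbell P r \<alpha> J2 s\<bar> \<le> \<alpha> * supnorm (\<lambda>s. J1 s - J2 s)"
    unfolding Tbell_def
  proof (rule Max_diff)
    fix a
    have "\<bar>\<Sum>j\<in>UNIV. P s a j * (J1 j - J2 j)\<bar> \<le> supnorm (\<lambda>s. J1 s - J2 s)"
      by (rule stoch_comb) (auto simp: P_nonneg P_stoch)
    moreover have "(r s a + \<alpha> * (\<Sum>j\<in>UNIV. P s a j * J1 j)) - (r s a + \<alpha> * (\<Sum>j\<in>UNIV. P s a j * J2 j))
       = \<alpha> * (\<Sum>j\<in>UNIV. P s a j * (J1 j - J2 j))"
      by (simp add: algebra_simps sum_subtractf)
    ultimately show "\<bar>(r s a + \<alpha> * (\<Sum>j\<in>UNIV. P s a j * J1 j)) - (r s a + \<alpha> * (\<Sum>j\<in>UNIV. P s a j * J2 j))\<bar>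
       \<le> \<alpha> * supnorm (\<lambda>s. J1 s - J2 s)"
      using alpha by (simp add: abs_mult)
  qed
qed

lemma Tbell_contr_pow: "supnorm (\<lambda>s. (Tbell P r \<alpha> ^^ n) J1 s - (Tbell P r \<alpha> ^^ n) J2 s) \<le> \<alpha> ^ n * supnorm (\<lambda>s. J1 s - J2 s)"
proof (induction n)
  case 0 then show ?case by simp
next
  case (Suc n)
  have "supnorm (\<lambda>s. (Tbell P r \<alpha> ^^ Suc n) J1 s - (Tbell P r \<alpha> ^^ Suc n) J2 s)
     \<le> \<alpha> * supnorm (\<lambda>s. (Tbell P r \<alpha> ^^ n) J1 s - (Tbell P r \<alpha> ^^ n) J2 s)"
    using Tbell_contr by simp
  also have "\<dots> \<le> \<alpha> * (\<alpha> ^ n * supnorm (\<lambda>s. J1 s - J2 s))"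
    by (rule mult_left_mono) (use Suc alpha in auto)
  finally show ?case by simp
qed

lemma Tbell_range:
  assumes "\<And>s. 0 \<le> J s \<and> J s \<le> 1 / (1 - \<alpha>)"
  shows "0 \<le> Tbell P r \<alpha> J s \<and> Tbell P r \<alpha> J s \<le> 1 / (1 - \<alpha>)"
proof -
  have each: "0 \<le> r s a + \<alpha> * (\<Sum>j\<in>UNIV. P s a j * J j) \<and> r s a + \<alpha> * (\<Sum>j\<in>UNIV. P s a j * J j) \<le> 1 / (1 - \<alpha>)" for a
  proof -
    have sr: "0 \<le> (\<Sum>j\<in>UNIV. P s a j * J j) \<and> (\<Sum>j\<in>UNIV. P s a j * J j) \<le> 1 / (1 - \<alpha>)"
      by (rule stoch_range) (auto simp: P_nonneg P_stoch assms)
    have "\<alpha> * (\<Sum>j\<in>UNIV. P s a j * J j) \<le> \<alpha> * (1 / (1 - \<alpha>))"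
      by (rule mult_left_mono) (use sr alpha in auto)
    moreover have "1 + \<alpha> * (1 / (1 - \<alpha>)) = 1 / (1 - \<alpha>)" using alpha by (simp add: field_simps)
    ultimately show ?thesis using sr r_range[of s a] alpha by auto
  qed
  show ?thesis unfolding Tbell_def
  proof
    have "r s undefined + \<alpha> * (\<Sum>j\<in>UNIV. P s undefined j * J j) \<le> Max (range (\<lambda>a. r s a + \<alpha> * (\<Sum>j\<in>UNIV. P s a j * J j)))"
      by (rule Max_ge) auto
    thus "0 \<le> Max (range (\<lambda>a. r s a + \<alpha> * (\<Sum>j\<in>UNIV. P s a j * J j)))" using each[of undefined] by linarith
    show "Max (range (\<lambda>a. r s a + \<alpha> * (\<Sum>j\<in>UNIV. P s a j * J j))) \<le> 1 / (1 - \<alpha>)"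
      by (subst Max_le_iff) (auto simp: each)
  qed
qed

lemma Tbell_pow_range:
  assumes "\<And>s. 0 \<le> J s \<and> J s \<le> 1 / (1 - \<alpha>)"
  shows "0 \<le> (Tbell P r \<alpha> ^^ n) J s \<and> (Tbell P r \<alpha> ^^ n) J s \<le> 1 / (1 - \<alpha>)"
  using assms by (induction n arbitrary: s) (auto intro!: Tbell_range)

lemma Pstep_nonneg: "Pstep P \<nu> t s j \<ge> 0"
  by (induction t arbitrary: j) (auto intro!: sum_nonneg simp: P_nonneg)

lemma Pstep_sum: "(\<Sum>j\<in>UNIV. Pstep P \<nu> t s j) = 1"
proof (induction t)
  case 0 then show ?case by simp
next
  case (Suc t)
  have "(\<Sum>j\<in>UNIV. Pstep P \<nu> (Suc t) s j) = (\<Sum>i\<in>UNIV. Pstep P \<nu> t s i * (\<Sum>j\<in>UNIV. P i (\<nu> i) j))"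
    by (simp add: sum_distrib_left) (rule sum.swap)
  also have "\<dots> = 1" using Suc by (simp add: P_stoch)
  finally show ?case .
qed

lemma Pstep_Suc': "Pstep P \<nu> (Suc t) s j = (\<Sum>i\<in>UNIV. P s (\<nu> s) i * Pstep P \<nu> t i j)"
proof (induction t arbitrary: s j)
  case 0 then show ?case by (simp only: Pstep.simps delta_sum1 delta_sum2)
next
  case (Suc t)
  have "Pstep P \<nu> (Suc (Suc t)) s j = (\<Sum>i\<in>UNIV. (\<Sum>l\<in>UNIV. P s (\<nu> s) l * Pstep P \<nu> t l i) * P i (\<nu> i) j)"
    using Suc by simp
  also have "\<dots> = (\<Sum>l\<in>UNIV. P s (\<nu> s) l * (\<Sum>i\<in>UNIV. Pstep P \<nu> t l i * P i (\<nu> i) j))"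
    by (simp add: sum_distrib_left sum_distrib_right mult.assoc) (rule sum.swap)
  also have "\<dots> = (\<Sum>i\<in>UNIV. P s (\<nu> s) i * Pstep P \<nu> (Suc t) i j)" by simp
  finally show ?case .
qed

definition gt :: "('s \<Rightarrow> 'a) \<Rightarrow> 's \<Rightarrow> nat \<Rightarrow> real" where
  "gt \<nu> s t = \<alpha> ^ t * (\<Sum>j\<in>UNIV. Pstep P \<nu> t s j * r j (\<nu> j))"

lemma gt_range: "0 \<le> gt \<nu> s t \<and> gt \<nu> s t \<le> \<alpha> ^ t"
proof -
  have "0 \<le> (\<Sum>j\<in>UNIV. Pstep P \<nu> t s j * r j (\<nu> j)) \<and> (\<Sum>j\<in>UNIV. Pstep P \<nu> t s j * r j (\<nu> j)) \<le> 1"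
    by (rule stoch_range) (auto simp: Pstep_nonneg Pstep_sum r_range)
  thus ?thesis unfolding gt_def using alpha by (auto simp: mult_left_le)
qed

lemma gt_summable: "summable (gt \<nu> s)"
  by (rule summable_comparison_test[of _ "\<lambda>t. \<alpha> ^ t"])
     (use gt_range alpha in \<open>auto intro!: summable_geometric\<close>)

lemma Jpol_eq: "Jpol P r \<alpha> \<nu> s = (\<Sum>t. gt \<nu> s t)"
  unfolding Jpol_def gt_def by simp

lemma Jpol_range: "0 \<le> Jpol P r \<alpha> \<nu> s \<and> Jpol P r \<alpha> \<nu> s \<le> 1 / (1 - \<alpha>)"
proof
  show "0 \<le> Jpol P r \<alpha> \<nu> s" unfolding Jpol_eq
    by (rule suminf_nonneg[OF gt_summable]) (use gt_range in auto)
  have "(\<Sum>t. gt \<nu> s t) \<le> (\<Sum>t. \<alpha> ^ t)"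
    by (rule suminf_le) (use gt_range alpha gt_summable in \<open>auto intro!: summable_geometric\<close>)
  also have "\<dots> = 1 / (1 - \<alpha>)" using alpha by (simp add: suminf_geometric)
  finally show "Jpol P r \<alpha> \<nu> s \<le> 1 / (1 - \<alpha>)" unfolding Jpol_eq .
qed

lemma Jpol_fix: "Tmu P r \<alpha> \<nu> (Jpol P r \<alpha> \<nu>) = Jpol P r \<alpha> \<nu>"
proof
  fix s
  have gS: "gt \<nu> s (Suc t) = \<alpha> * (\<Sum>i\<in>UNIV. P s (\<nu> s) i * gt \<nu> i t)" for t
  proof -
    have "(\<Sum>j\<in>UNIV. Pstep P \<nu> (Suc t) s j * r j (\<nu> j))
        = (\<Sum>j\<in>UNIV. \<Sum>i\<in>UNIV. P s (\<nu> s) i * (Pstep P \<nu> t i j * r j (\<nu> j)))"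
      unfolding Pstep_Suc' by (simp add: sum_distrib_right mult.assoc)
    also have "\<dots> = (\<Sum>i\<in>UNIV. \<Sum>j\<in>UNIV. P s (\<nu> s) i * (Pstep P \<nu> t i j * r j (\<nu> j)))"
      by (rule sum.swap)
    also have "\<dots> = (\<Sum>i\<in>UNIV. P s (\<nu> s) i * (\<Sum>j\<in>UNIV. Pstep P \<nu> t i j * r j (\<nu> j)))"
      by (simp add: sum_distrib_left)
    finally have e: "(\<Sum>j\<in>UNIV. Pstep P \<nu> (Suc t) s j * r j (\<nu> j))
        = (\<Sum>i\<in>UNIV. P s (\<nu> s) i * (\<Sum>j\<in>UNIV. Pstep P \<nu> t i j * r j (\<nu> j)))" .
    have "gt \<nu> s (Suc t) = \<alpha> * (\<alpha> ^ t * (\<Sum>i\<in>UNIV. P s (\<nu> s) i * (\<Sum>j\<in>UNIV. Pstep P \<nu> t i j * r j (\<nu> j))))"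
      unfolding gt_def e by simp
    also have "\<dots> = \<alpha> * (\<Sum>i\<in>UNIV. P s (\<nu> s) i * gt \<nu> i t)"
      unfolding gt_def by (simp add: sum_distrib_left mult_ac)
    finally show ?thesis .
  qed
  have "(\<Sum>t. gt \<nu> s t) = (\<Sum>t. gt \<nu> s (Suc t)) + gt \<nu> s 0"
    using suminf_split_head[OF gt_summable, of \<nu> s] by simp
  also have "(\<Sum>t. gt \<nu> s (Suc t)) = \<alpha> * (\<Sum>i\<in>UNIV. P s (\<nu> s) i * (\<Sum>t. gt \<nu> i t))"
  proof -
    have "(\<Sum>t. gt \<nu> s (Suc t)) = (\<Sum>t. \<alpha> * (\<Sum>i\<in>UNIV. P s (\<nu> s) i * gt \<nu> i t))" by (simp add: gS)
    also have "\<dots> = \<alpha> * (\<Sum>t. (\<Sum>i\<in>UNIV. P s (\<nu> s) i * gt \<nu> i t))"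
      by (rule suminf_mult) (rule summable_sum, rule summable_mult, rule gt_summable)
    also have "(\<Sum>t. (\<Sum>i\<in>UNIV. P s (\<nu> s) i * gt \<nu> i t)) = (\<Sum>i\<in>UNIV. (\<Sum>t. P s (\<nu> s) i * gt \<nu> i t))"
      by (rule suminf_sum) (rule summable_mult, rule gt_summable)
    also have "\<dots> = (\<Sum>i\<in>UNIV. P s (\<nu> s) i * (\<Sum>t. gt \<nu> i t))"
      by (rule sum.cong) (simp_all add: suminf_mult gt_summable)
    finally show ?thesis .
  qed
  also have "gt \<nu> s 0 = r s (\<nu> s)" unfolding gt_def by (simp only: Pstep.simps delta_sum1 power_0 mult_1)
  finally show "Tmu P r \<alpha> \<nu> (Jpol P r \<alpha> \<nu>) s = Jpol P r \<alpha> \<nu> s"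
    unfolding Tmu_def Jpol_eq by simp
qed

lemma Jpol_fix_pow: "(Tmu P r \<alpha> \<nu> ^^ n) (Jpol P r \<alpha> \<nu>) = Jpol P r \<alpha> \<nu>"
  by (induction n) (simp_all add: Jpol_fix)

end

theorem mainTheorem3:
  fixes P :: "'s::finite \<Rightarrow> 'a::finite \<Rightarrow> 's \<Rightarrow> real"
    and r :: "'s \<Rightarrow> 'a \<Rightarrow> real"
    and \<alpha> :: real
    and m H :: nat
    and eps_LA eps_PE :: real
    and \<phi> :: "'s \<Rightarrow> real^'d"
    and D :: "nat \<Rightarrow> 's set"
    and J :: "nat \<Rightarrow> ('s \<Rightarrow> real)"
    and \<mu> :: "nat \<Rightarrow> ('s \<Rightarrow> 'a)"
    and w :: "nat \<Rightarrow> ('s \<Rightarrow> real)"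
  assumes P_nonneg: "\<And>s a j. P s a j \<ge> 0"
    and P_stoch: "\<And>s a. (\<Sum>j\<in>UNIV. P s a j) = 1"
    and r_range: "\<And>s a. 0 \<le> r s a \<and> r s a \<le> 1"
    and alpha: "0 < \<alpha>" "\<alpha> < 1"
    and m_pos: "m \<ge> 1" and H_pos: "H \<ge> 1"
    and eps: "eps_LA \<ge> 0" "eps_PE \<ge> 0"
    and rank: "\<And>k. dim (\<phi> ` D k) = CARD('d)"
    and lookahead: "\<And>k. supnorm (\<lambda>s. (Tbell P r \<alpha> ^^ H) (J k) s
                         - Tmu P r \<alpha> (\<mu> (Suc k)) ((Tbell P r \<alpha> ^^ (H - 1)) (J k)) s) \<le> eps_LA"
    and w_supp: "\<And>k i. i \<notin> D k \<Longrightarrow> w (Suc k) i = 0"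
    and w_bound: "\<And>k. supnorm (w (Suc k)) \<le> eps_PE"
    and J_step: "\<And>k. J (Suc k) = matapp (lsq_mat \<phi> (D k))
                   (\<lambda>s. (Tmu P r \<alpha> (\<mu> (Suc k)) ^^ m) ((Tbell P r \<alpha> ^^ (H - 1)) (J k)) s
                        + w (Suc k) s)"
    and FV_finite: "bdd_above ((\<lambda>k. matnorm (lsq_mat \<phi> (D (k - 1)))) ` {1..})"
  shows "let \<delta>FV = (SUP k\<in>{1..}. matnorm (lsq_mat \<phi> (D (k - 1))));
             \<delta>app = (SUP k\<in>{1..}. SUP \<nu>\<in>(UNIV :: ('s \<Rightarrow> 'a) set).
                       supnorm (\<lambda>s. matapp (lsq_mat \<phi> (D (k - 1))) (Jpol P r \<alpha> \<nu>) s
                                     - Jpol P r \<alpha> \<nu> s));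
             \<beta> = \<alpha> ^ (m + H - 1) * \<delta>FV;
             \<tau> = (\<alpha> ^ m + \<alpha> ^ (m + H - 1)) / (1 - \<alpha>) * \<delta>FV + \<delta>app + \<delta>FV * eps_PE
         in (\<forall>k\<ge>1. supnorm (\<lambda>s. J k s - Jpol P r \<alpha> (\<mu> k) s)
                    \<le> \<beta> * supnorm (\<lambda>s. J (k - 1) s - Jpol P r \<alpha> (\<mu> (k - 1)) s) + \<tau>)
          \<and> (\<beta> < 1 \<longrightarrow> (\<forall>k. supnorm (\<lambda>s. J k s - Jpol P r \<alpha> (\<mu> k) s)
                    \<le> \<beta> ^ k * supnorm (\<lambda>s. J 0 s - Jpol P r \<alpha> (\<mu> 0) s) + \<tau> / (1 - \<beta>)))"
proof -
  define FV where "FV = (SUP k\<in>{1..}. matnorm (lsq_mat \<phi> (D (k - 1))))"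
  define app where "app = (SUP k\<in>{1..}. SUP \<nu>\<in>(UNIV :: ('s \<Rightarrow> 'a) set).
                       supnorm (\<lambda>s. matapp (lsq_mat \<phi> (D (k - 1))) (Jpol P r \<alpha> \<nu>) s
                                     - Jpol P r \<alpha> \<nu> s))"
  define \<beta> where "\<beta> = \<alpha> ^ (m + H - 1) * FV"
  define \<tau> where "\<tau> = (\<alpha> ^ m + \<alpha> ^ (m + H - 1)) / (1 - \<alpha>) * FV + app + FV * eps_PE"
  define e where "e = (\<lambda>k. supnorm (\<lambda>s. J k s - Jpol P r \<alpha> (\<mu> k) s))"
  define B where "B = 1 / (1 - \<alpha>)"
  note ctx = P_nonneg P_stoch r_range alpha
  have B0: "0 \<le> B" using alpha by (simp add: B_def)
  have FVge: "matnorm (lsq_mat \<phi> (D n)) \<le> FV" for n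
    unfolding FV_def using cSUP_upper[OF _ FV_finite, of "Suc n"] by simp
  have FV0: "0 \<le> FV" using FVge[of 0] matnorm_nonneg order_trans by blast
  have Jr: "0 \<le> Jpol P r \<alpha> \<nu> s \<and> Jpol P r \<alpha> \<nu> s \<le> B" for \<nu> s
    using Jpol_range[of P r \<alpha>, OF ctx] unfolding B_def by blast
  have Jb: "supnorm (Jpol P r \<alpha> \<nu>) \<le> B" for \<nu>
    by (rule supnorm_le) (use Jr in auto)
  have inner: "supnorm (\<lambda>s. matapp (lsq_mat \<phi> (D n)) (Jpol P r \<alpha> \<nu>) s - Jpol P r \<alpha> \<nu> s) \<le> FV * B + B" for n \<nu>
  proof (rule supnorm_le)
    fix s
    have "\<bar>matapp (lsq_mat \<phi> (D n)) (Jpol P r \<alpha> \<nu>) s\<bar> \<le> matnorm (lsq_mat \<phi> (D n)) * supnorm (Jpol P r \<alpha> \<nu>)"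
      by (rule matapp_bound)
    also have "\<dots> \<le> FV * B" by (rule mult_mono) (use FVge Jb FV0 supnorm_nonneg in auto)
    finally show "\<bar>matapp (lsq_mat \<phi> (D n)) (Jpol P r \<alpha> \<nu>) s - Jpol P r \<alpha> \<nu> s\<bar> \<le> FV * B + B"
      using Jr[of \<nu> s] by linarith
  qed
  have bdd: "bdd_above ((\<lambda>k. SUP \<nu>\<in>(UNIV :: ('s \<Rightarrow> 'a) set).
                       supnorm (\<lambda>s. matapp (lsq_mat \<phi> (D (k - 1))) (Jpol P r \<alpha> \<nu>) s
                                     - Jpol P r \<alpha> \<nu> s)) ` {1..})"
    by (rule bdd_aboveI[of _ "FV * B + B"]) (auto intro!: cSUP_least inner)
  have appge: "supnorm (\<lambda>s. matapp (lsq_mat \<phi> (D n)) (Jpol P r \<alpha> \<nu>) s - Jpol P r \<alpha> \<nu> s) \<le> app" for n \<nu>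
  proof -
    have "supnorm (\<lambda>s. matapp (lsq_mat \<phi> (D n)) (Jpol P r \<alpha> \<nu>) s - Jpol P r \<alpha> \<nu> s)
        \<le> (SUP \<nu>\<in>(UNIV :: ('s \<Rightarrow> 'a) set).
                       supnorm (\<lambda>s. matapp (lsq_mat \<phi> (D n)) (Jpol P r \<alpha> \<nu>) s
                                     - Jpol P r \<alpha> \<nu> s))"
      by (rule cSUP_upper) (auto intro!: bdd_above_finite)
    also have "\<dots> \<le> app" unfolding app_def using cSUP_upper[OF _ bdd, of "Suc n"] by simp
    finally show ?thesis .
  qed
  have app0: "0 \<le> app" using appge[of 0 undefined] supnorm_nonneg order_trans by blast
  have step: "e (Suc n) \<le> \<beta> * e n + \<tau>" for n
  proof -
    define M where "M = lsq_mat \<phi> (D n)"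
    define Jp where "Jp = Jpol P r \<alpha> (\<mu> (Suc n))"
    define Jq where "Jq = Jpol P r \<alpha> (\<mu> n)"
    define Z where "Z = (Tbell P r \<alpha> ^^ (H - 1)) (J n)"
    define y where "y = (Tmu P r \<alpha> (\<mu> (Suc n)) ^^ m) Z"
    have Zb: "supnorm (\<lambda>s. Z s - Jp s) \<le> \<alpha> ^ (H - 1) * e n + B"
    proof (rule supnorm_le)
      fix s
      have "\<bar>Z s - (Tbell P r \<alpha> ^^ (H - 1)) Jq s\<bar> \<le> supnorm (\<lambda>s. Z s - (Tbell P r \<alpha> ^^ (H - 1)) Jq s)"
        by (rule supnorm_ge)
      also have "\<dots> \<le> \<alpha> ^ (H - 1) * e n"
        unfolding Z_def e_def Jq_def by (rule Tbell_contr_pow[of P r \<alpha>, OF ctx])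
      finally have 1: "\<bar>Z s - (Tbell P r \<alpha> ^^ (H - 1)) Jq s\<bar> \<le> \<alpha> ^ (H - 1) * e n" .
      have 2: "0 \<le> (Tbell P r \<alpha> ^^ (H - 1)) Jq s \<and> (Tbell P r \<alpha> ^^ (H - 1)) Jq s \<le> B"
        unfolding B_def Jq_def by (rule Tbell_pow_range[of P r \<alpha>, OF ctx]) (use Jr B_def in auto)
      have 3: "0 \<le> Jp s \<and> Jp s \<le> B" unfolding Jp_def using Jr by blast
      show "\<bar>Z s - Jp s\<bar> \<le> \<alpha> ^ (H - 1) * e n + B" using 1 2 3 by (auto simp: abs_le_iff)
    qed
    have yb: "supnorm (\<lambda>s. y s - Jp s) \<le> \<alpha> ^ m * (\<alpha> ^ (H - 1) * e n + B)"
    proof -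
      have "supnorm (\<lambda>s. y s - Jp s) = supnorm (\<lambda>s. (Tmu P r \<alpha> (\<mu> (Suc n)) ^^ m) Z s - (Tmu P r \<alpha> (\<mu> (Suc n)) ^^ m) Jp s)"
        unfolding y_def Jp_def by (simp only: Jpol_fix_pow[of P r \<alpha>, OF ctx])
      also have "\<dots> \<le> \<alpha> ^ m * supnorm (\<lambda>s. Z s - Jp s)" by (rule Tmu_contr_pow[of P r \<alpha>, OF ctx])
      also have "\<dots> \<le> \<alpha> ^ m * (\<alpha> ^ (H - 1) * e n + B)"
        by (rule mult_left_mono[OF Zb]) (use alpha in simp)
      finally show ?thesis .
    qed
    have en0: "0 \<le> e n" unfolding e_def by (rule supnorm_nonneg)
    have main0: "supnorm (\<lambda>s. J (Suc n) s - Jpol P r \<alpha> (\<mu> (Suc n)) s) \<le> FV * (\<alpha> ^ m * (\<alpha> ^ (H - 1) * e n + B)) + app + FV * eps_PE"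
    proof (rule supnorm_le)
      fix s
      have Js: "J (Suc n) s = matapp M (\<lambda>s. y s + w (Suc n) s) s"
        unfolding M_def y_def Z_def using J_step[of n] by simp
      have "J (Suc n) s - Jp s = matapp M (\<lambda>s. y s - Jp s) s + (matapp M Jp s - Jp s) + matapp M (w (Suc n)) s"
        unfolding Js matapp_split[of M y "w (Suc n)" s Jp] by simp
      moreover have "\<bar>matapp M (\<lambda>s. y s - Jp s) s\<bar> \<le> FV * (\<alpha> ^ m * (\<alpha> ^ (H - 1) * e n + B))"
      proof -
        have "\<bar>matapp M (\<lambda>s. y s - Jp s) s\<bar> \<le> matnorm M * supnorm (\<lambda>s. y s - Jp s)" by (rule matapp_bound)
        also have "\<dots> \<le> FV * (\<alpha> ^ m * (\<alpha> ^ (H - 1) * e n + B))"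
          by (rule mult_mono) (use FVge M_def yb FV0 supnorm_nonneg in auto)
        finally show ?thesis .
      qed
      moreover have "\<bar>matapp M Jp s - Jp s\<bar> \<le> app"
        using supnorm_ge[of "\<lambda>s. matapp M Jp s - Jp s" s] appge[of n "\<mu> (Suc n)"]
        unfolding M_def Jp_def by linarith
      moreover have "\<bar>matapp M (w (Suc n)) s\<bar> \<le> FV * eps_PE"
      proof -
        have "\<bar>matapp M (w (Suc n)) s\<bar> \<le> matnorm M * supnorm (w (Suc n))" by (rule matapp_bound)
        also have "\<dots> \<le> FV * eps_PE"
          by (rule mult_mono) (use FVge M_def w_bound FV0 supnorm_nonneg in auto)
        finally show ?thesis .
      qed
      ultimately show "\<bar>J (Suc n) s - Jpol P r \<alpha> (\<mu> (Suc n)) s\<bar> \<le> FV * (\<alpha> ^ m * (\<alpha> ^ (H - 1) * e n + B)) + app + FV * eps_PE"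
        unfolding Jp_def by (smt (verit))
    qed
    have main: "e (Suc n) \<le> FV * (\<alpha> ^ m * (\<alpha> ^ (H - 1) * e n + B)) + app + FV * eps_PE"
      using main0 by (simp add: e_def)
    have pw: "\<alpha> ^ (m + H - 1) = \<alpha> ^ m * \<alpha> ^ (H - 1)"
      using H_pos by (simp add: power_add[symmetric])
    have tau_eq: "\<tau> = \<alpha> ^ m * B * FV + \<alpha> ^ (m + H - 1) / (1 - \<alpha>) * FV + app + FV * eps_PE"
      unfolding \<tau>_def B_def by (simp add: add_divide_distrib algebra_simps)
    have X0: "0 \<le> \<alpha> ^ (m + H - 1) / (1 - \<alpha>) * FV" using alpha FV0 by simp
    have "FV * (\<alpha> ^ m * (\<alpha> ^ (H - 1) * e n + B)) = \<beta> * e n + \<alpha> ^ m * B * FV"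
      unfolding \<beta>_def pw by (simp add: algebra_simps)
    thus ?thesis using main tau_eq X0 by linarith
  qed
  have part1: "\<forall>k\<ge>1. e k \<le> \<beta> * e (k - 1) + \<tau>"
  proof (intro allI impI)
    fix k :: nat assume "k \<ge> 1"
    then obtain n where "k = Suc n" by (cases k) auto
    thus "e k \<le> \<beta> * e (k - 1) + \<tau>" using step by simp
  qed
  have part2: "\<beta> < 1 \<longrightarrow> (\<forall>k. e k \<le> \<beta> ^ k * e 0 + \<tau> / (1 - \<beta>))"
  proof (intro impI allI)
    assume b1: "\<beta> < 1"
    have b0: "0 \<le> \<beta>" unfolding \<beta>_def using alpha FV0 by simp
    have t0: "0 \<le> \<tau>" unfolding \<tau>_def using alpha FV0 app0 eps by simp
    fix k show "e k \<le> \<beta> ^ k * e 0 + \<tau> / (1 - \<beta>)"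
    proof (induction k)
      case 0 show ?case using b1 t0 by simp
    next
      case (Suc k)
      have "e (Suc k) \<le> \<beta> * e k + \<tau>" by (rule step)
      also have "\<dots> \<le> \<beta> * (\<beta> ^ k * e 0 + \<tau> / (1 - \<beta>)) + \<tau>"
        using mult_left_mono[OF Suc b0] by linarith
      also have "\<dots> = \<beta> ^ Suc k * e 0 + \<tau> / (1 - \<beta>)"
        using b1 by (simp add: field_simps)
      finally show ?case .
    qed
  qed
  show ?thesis
    unfolding Let_def FV_def[symmetric] app_def[symmetric] \<beta>_def[symmetric] \<tau>_def[symmetric]
    using part1 part2 unfolding e_def by blast
qed

end
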